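(* Let $n\ge2$ be an integer. (1) For $2\le k\le n$, let $x_1^{(n-1,k-1)}$ denote the smallest real root of $x\mapsto K_{k-1}^{(n-1)}(x)$. Then $K_k^{(n)}(x)\ge K_k^{(n)}(x+1)$ for all real $x$ with $0\le x\le x_1^{(n-1,k-1)}$. (2) For all $k\in[0:n]$ and all integers $x\in[0:n]$, \[ \left|K_k^{(n)}(x)\right|<2^{\frac n2\left(1+H\left(\frac kn\right)-H\left(\frac xn\right)+\frac1n\log_2(n+1)\right)}, \] where $H(p)=-p\log_2p-(1-p)\log_2(1-p)$ is the binary entropy function (with $H(0)=H(1)=0$).
   Context: For integers $n\ge1$, $k\in[0:n]$ and real $x$, the Krawtchouk polynomial is $K_k^{(n)}(x):=\sum_{j=0}^{k}(-1)^{j}\binom{x}{j}\binom{n-x}{k-j}$, with generalized binomial coefficients $\binom{x}{j}=\frac{x(x-1)\cdots(x-j+1)}{j!}$. For $k\ge1$, $x\mapsto K_k^{(n)}(x)$ has $k$ distinct real roots. *)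

theory Defs
  imports "HOL-Analysis.Analysis"
begin

definition krawtchouk :: "nat \<Rightarrow> nat \<Rightarrow> real \<Rightarrow> real" where
  "krawtchouk n k x = (\<Sum>j\<le>k. (-1)^j * (x gchoose j) * ((real n - x) gchoose (k - j)))"

text \<open>Smallest real root of x \<mapsto> K_k^{(n)}(x) (k \<ge> 1, where the root set is finite and nonempty).\<close>
definition kraw_smallest_root :: "nat \<Rightarrow> nat \<Rightarrow> real" where
  "kraw_smallest_root n k = Min {x. krawtchouk n k x = 0}"

definition binary_entropy :: "real \<Rightarrow> real" where
  "binary_entropy p = (if p = 0 \<or> p = 1 then 0
     else - p * log 2 p - (1 - p) * log 2 (1 - p))"

end

theory Submission
  imports Defs "HOL-Computational_Algebra.Polynomial"
begin


lemma coeff_lin_pow: "coeff ([:1, c:] ^ m) i = of_nat (m choose i) * (c::real) ^ i"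
proof (induction m arbitrary: i)
  case 0 then show ?case by (cases i) auto
next
  case (Suc m)
  show ?case
  proof (cases i)
    case 0 then show ?thesis using Suc by simp
  next
    case (Suc j)
    have "[:1, c:] ^ Suc m = [:1,c:] ^ m + pCons 0 (smult c ([:1,c:]^m))" by simp
    then show ?thesis using Suc.IH \<open>i = Suc j\<close> by (simp add: coeff_pCons algebra_simps)
  qed
qed

lemma kraw_gen:
  assumes "y \<le> n"
  shows "(1 - z)^y * (1 + z)^(n-y) = (\<Sum>k\<le>n. krawtchouk n k (real y) * (z::real)^k)"
proof -
  define P where "P = [:1, -1:]^y * [:1, 1::real:]^(n-y)"
  have deg: "degree P \<le> n"
  proof -
    have "degree P \<le> degree ([:1, -1::real:]^y) + degree ([:1, 1::real:]^(n-y))"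
      unfolding P_def by (rule degree_mult_le)
    also have "\<dots> \<le> y + (n - y)"
      by (intro add_mono order.trans[OF degree_power_le]) auto
    finally show ?thesis using assms by simp
  qed
  have pz: "poly P z = (1 - z)^y * (1 + z)^(n-y)" unfolding P_def by simp
  have "poly P z = (\<Sum>k\<le>degree P. coeff P k * z^k)" by (rule poly_altdef)
  also have "\<dots> = (\<Sum>k\<le>n. coeff P k * z^k)"
    by (rule sum.mono_neutral_left) (use deg in \<open>auto simp: coeff_eq_0\<close>)
  also have "\<dots> = (\<Sum>k\<le>n. krawtchouk n k (real y) * z^k)"
  proof (rule sum.cong[OF refl])
    fix k assume "k \<in> {..n}"
    have "coeff P k = (\<Sum>i\<le>k. coeff ([:1, -1::real:]^y) i * coeff ([:1, 1::real:]^(n-y)) (k-i))"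
      unfolding P_def by (rule coeff_mult)
    also have "\<dots> = krawtchouk n k (real y)"
      unfolding krawtchouk_def
    proof (intro sum.cong refl)
      fix i assume "i \<in> {..k}"
      have e: "real n - real y = real (n - y)" using assms by simp
      show "coeff ([:1, -1::real:]^y) i * coeff ([:1, 1::real:]^(n-y)) (k-i) =
        (-1)^i * (real y gchoose i) * ((real n - real y) gchoose (k - i))"
        unfolding coeff_lin_pow e binomial_gbinomial[symmetric] by simp
    qed
    finally show "coeff P k * z ^ k = krawtchouk n k (real y) * z ^ k" by simp
  qed
  finally show ?thesis using pz by simp
qed

lemma poly_coeff_unique:
  assumes "\<And>z::real. (\<Sum>k\<le>N. a k * z^k) = (\<Sum>k\<le>N. b k * z^k)" and "k \<le> N"
  shows "a k = b k"
proof -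
  define p where "p = (\<Sum>k\<le>N. monom (a k - b k) k)"
  have "poly p z = 0" for z
    using assms(1)[of z] by (simp add: p_def poly_sum poly_monom algebra_simps sum_subtractf)
  hence "p = 0" using poly_all_0_iff_0 by blast
  hence "coeff p k = 0" by simp
  moreover have "coeff p k = a k - b k" using assms(2) by (simp add: p_def coeff_sum)
  ultimately show ?thesis by simp
qed

lemma parseval:
  "(\<Sum>y\<le>n. real (n choose y) * (krawtchouk n k (real y))^2) = 2^n * real (n choose k)"
  if "k \<le> n"
proof -
  define G where "G y w = (1 - w)^y * (1 + w)^(n-y)" for y :: nat and w :: real
  have G: "G y w = (\<Sum>l\<le>n. krawtchouk n l (real y) * w^l)" if "y \<le> n" for y w
    unfolding G_def using kraw_gen[OF that] .
  have step1: "(\<Sum>y\<le>n. real (n choose y) * krawtchouk n k (real y) * G y w) = 2^n * real (n choose k) * w^k"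
    if "k \<le> n" for k w
  proof -
    have "(\<Sum>k\<le>n. (\<Sum>y\<le>n. real (n choose y) * krawtchouk n k (real y) * G y w) * z^k)
        = (\<Sum>k\<le>n. (2^n * real (n choose k) * w^k) * z^k)" for z
    proof -
      have "(\<Sum>k\<le>n. (\<Sum>y\<le>n. real (n choose y) * krawtchouk n k (real y) * G y w) * z^k)
          = (\<Sum>y\<le>n. real (n choose y) * G y w * (\<Sum>k\<le>n. krawtchouk n k (real y) * z^k))"
        unfolding sum_distrib_left sum_distrib_right
        by (subst sum.swap) (intro sum.cong refl, simp add: mult_ac)
      also have "\<dots> = (\<Sum>y\<le>n. real (n choose y) * ((1 - z) * (1 - w))^y * ((1 + z) * (1 + w))^(n-y))"
      proof (intro sum.cong refl)
        fix y assume "y \<in> {..n}"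
        hence e: "(\<Sum>k\<le>n. krawtchouk n k (real y) * z^k) = (1-z)^y*(1+z)^(n-y)"
          using kraw_gen[of y n z] by simp
        show "real (n choose y) * G y w * (\<Sum>k\<le>n. krawtchouk n k (real y) * z^k) =
          real (n choose y) * ((1 - z) * (1 - w))^y * ((1 + z) * (1 + w))^(n-y)"
          unfolding e G_def by (simp add: power_mult_distrib mult_ac)
      qed
      also have "\<dots> = ((1 - z) * (1 - w) + (1 + z) * (1 + w))^n"
        by (rule binomial_ring[symmetric])
      also have "\<dots> = (2 * (z * w) + 2)^n" by (simp add: algebra_simps)
      also have "\<dots> = (\<Sum>k\<le>n. real (n choose k) * (2 * (z * w))^k * 2^(n-k))"
        by (rule binomial_ring)
      also have "\<dots> = (\<Sum>k\<le>n. (2^n * real (n choose k) * w^k) * z^k)"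
      proof (intro sum.cong refl)
        fix k assume "k \<in> {..n}"
        hence "(2::real)^k * 2^(n-k) = 2^n" by (simp add: power_add[symmetric])
        thus "real (n choose k) * (2 * (z * w))^k * 2^(n-k) = (2^n * real (n choose k) * w^k) * z^k"
          by (simp add: power_mult_distrib mult_ac)
      qed
      finally show ?thesis .
    qed
    from poly_coeff_unique[OF this that] show ?thesis by simp
  qed
  have "(\<Sum>l\<le>n. (\<Sum>y\<le>n. real (n choose y) * krawtchouk n k (real y) * krawtchouk n l (real y)) * w^l)
      = (\<Sum>l\<le>n. (if l = k then 2^n * real (n choose k) else 0) * w^l)" for w
  proof -
    have "(\<Sum>y\<le>n. real (n choose y) * krawtchouk n k (real y) * G y w)
       = (\<Sum>y\<le>n. \<Sum>l\<le>n. real (n choose y) * krawtchouk n k (real y) * krawtchouk n l (real y) * w^l)"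
      by (intro sum.cong refl) (simp add: G sum_distrib_left mult.assoc)
    also have "\<dots> = (\<Sum>l\<le>n. \<Sum>y\<le>n. real (n choose y) * krawtchouk n k (real y) * krawtchouk n l (real y) * w^l)"
      by (rule sum.swap)
    also have "\<dots> = (\<Sum>l\<le>n. (\<Sum>y\<le>n. real (n choose y) * krawtchouk n k (real y) * krawtchouk n l (real y)) * w^l)"
      by (simp add: sum_distrib_right)
    finally have "(\<Sum>l\<le>n. (\<Sum>y\<le>n. real (n choose y) * krawtchouk n k (real y) * krawtchouk n l (real y)) * w^l)
       = (\<Sum>y\<le>n. real (n choose y) * krawtchouk n k (real y) * G y w)" by simp
    also have "\<dots> = 2^n * real (n choose k) * w^k" by (rule step1[OF that])
    also have "\<dots> = (\<Sum>l\<le>n. if l = k then 2^n * real (n choose k) * w^l else 0)"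
      using that by simp
    also have "\<dots> = (\<Sum>l\<le>n. (if l = k then 2^n * real (n choose k) else 0) * w^l)"
      by (intro sum.cong) auto
    finally show ?thesis .
  qed
  note pcu = poly_coeff_unique[OF this that]
  from pcu have "(\<Sum>y\<le>n. real (n choose y) * krawtchouk n k (real y) * krawtchouk n k (real y)) = 2^n * real (n choose k)"
    by (simp only: simp_thms if_True)
  then show ?thesis by (simp only: power2_eq_square mult.assoc)
qed

lemma kraw_at_0: "krawtchouk m j 0 = real (m choose j)"
proof -
  have "krawtchouk m j 0 = (\<Sum>i\<le>j. if i = 0 then real (m choose j) else 0)"
    unfolding krawtchouk_def
    by (intro sum.cong refl) (auto simp: gbinomial_0_left binomial_gbinomial[symmetric])
  also have "\<dots> = real (m choose j)" by simp
  finally show ?thesis .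
qed

lemma kraw_at_n: "k \<le> n \<Longrightarrow> krawtchouk n k (real n) = (-1)^k * real (n choose k)"
proof -
  assume k: "k \<le> n"
  have "krawtchouk n k (real n) = (\<Sum>i\<le>k. if i = k then (-1)^k * real (n choose k) else 0)"
    unfolding krawtchouk_def
    by (intro sum.cong refl) (auto simp: gbinomial_0_left binomial_gbinomial[symmetric])
  also have "\<dots> = (-1)^k * real (n choose k)" by simp
  finally show ?thesis .
qed

lemma binom_term_le: "k \<le> n \<Longrightarrow> (n choose k) * k^k * (n-k)^(n-k) \<le> n^n"
proof -
  assume k: "k \<le> n"
  have "n^n = (k + (n-k))^n" using k by simp
  also have "\<dots> = (\<Sum>j\<le>n. (n choose j) * k^j * (n-k)^(n-j))"
    by (simp add: binomial_ring)
  finally have e: "n^n = (\<Sum>j\<le>n. (n choose j) * k^j * (n-k)^(n-j))" .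
  have "(n choose k) * k^k * (n-k)^(n-k) \<le> (\<Sum>j\<le>n. (n choose j) * k^j * (n-k)^(n-j))"
    by (rule member_le_sum[where f="\<lambda>j. (n choose j) * k^j * (n-k)^(n-j)"]) (use k in auto)
  then show ?thesis using e by simp
qed

lemma mode_lemma: "x \<le> n \<Longrightarrow> n^n \<le> (n+1) * ((n choose x) * x^x * (n-x)^(n-x))"
proof -
  assume x: "x \<le> n"
  define u where "u j = (n choose j) * x^j * (n-x)^(n-j)" for j
  have up: "u j \<le> u (Suc j)" if "j < x" for j
  proof -
    have nj: "n - j = Suc (n - Suc j)" using that x by simp
    have bin: "(n choose Suc j) * Suc j = (n choose j) * (n - j)"
      using binomial_absorption[of j n] binomial_absorb_comp[of n j] by (simp add: mult.commute)
    have "(n - x) * Suc j \<le> (n - j) * x"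
      using that x by (intro mult_le_mono) auto
    hence "(n choose j) * (n - x) * Suc j \<le> (n choose j) * (n - j) * x"
      by (simp only: mult.assoc) (rule mult_le_mono2)
    hence "(n choose j) * (n - x) * Suc j \<le> (n choose Suc j) * x * Suc j"
      using bin by (simp add: mult_ac)
    hence c: "(n choose j) * (n - x) \<le> (n choose Suc j) * x"
      using mult_le_cancel2 by blast
    have "u j = ((n choose j) * (n - x)) * (x^j * (n-x)^(n - Suc j))"
      unfolding u_def nj by (simp add: mult_ac)
    also have "\<dots> \<le> ((n choose Suc j) * x) * (x^j * (n-x)^(n - Suc j))"
      using c by (rule mult_right_mono) simp
    also have "\<dots> = u (Suc j)" unfolding u_def by (simp add: mult_ac)
    finally show ?thesis .
  qed
  have down: "u (Suc j) \<le> u j" if "x \<le> j" "j < n" for j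
  proof -
    have nj: "n - j = Suc (n - Suc j)" using that by simp
    have bin: "(n choose Suc j) * Suc j = (n choose j) * (n - j)"
      using binomial_absorption[of j n] binomial_absorb_comp[of n j] by (simp add: mult.commute)
    have "(n - j) * x \<le> (n - x) * Suc j"
      using that by (intro mult_le_mono) auto
    hence "(n choose j) * (n - j) * x \<le> (n choose j) * (n - x) * Suc j"
      by (simp only: mult.assoc) (rule mult_le_mono2)
    hence "(n choose Suc j) * x * Suc j \<le> (n choose j) * (n - x) * Suc j"
      using bin by (simp add: mult_ac)
    hence c: "(n choose Suc j) * x \<le> (n choose j) * (n - x)"
      using mult_le_cancel2 by blast
    have "u (Suc j) = ((n choose Suc j) * x) * (x^j * (n-x)^(n - Suc j))"
      unfolding u_def by (simp add: mult_ac)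
    also have "\<dots> \<le> ((n choose j) * (n - x)) * (x^j * (n-x)^(n - Suc j))"
      using c by (rule mult_right_mono) simp
    also have "\<dots> = u j" unfolding u_def nj by (simp add: mult_ac)
    finally show ?thesis .
  qed
  have le1: "u (x - d) \<le> u x" for d
  proof (induction d)
    case 0 then show ?case by simp
  next
    case (Suc d)
    show ?case
    proof (cases "d < x")
      case True
      have "x - d = Suc (x - Suc d)" using True by simp
      hence "u (x - Suc d) \<le> u (x - d)" using up[of "x - Suc d"] True by simp
      then show ?thesis using Suc.IH by simp
    next
      case False then show ?thesis using Suc.IH by simp
    qed
  qed
  have le2: "x + d \<le> n \<Longrightarrow> u (x + d) \<le> u x" for d
  proof (induction d)
    case 0 then show ?case by simp
  next
    case (Suc d)
    have "u (Suc (x + d)) \<le> u (x + d)" using down[of "x + d"] Suc.prems by simp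
    then show ?case using Suc by simp
  qed
  have all: "u j \<le> u x" if "j \<le> n" for j
  proof (cases "j \<le> x")
    case True then show ?thesis using le1[of "x - j"] by simp
  next
    case False then show ?thesis using le2[of "j - x"] that by simp
  qed
  have "n^n = (x + (n-x))^n" using x by simp
  also have "\<dots> = (\<Sum>j\<le>n. u j)"
    by (simp add: binomial_ring u_def)
  also have "\<dots> \<le> (\<Sum>j\<le>n. u x)" by (rule sum_mono) (use all in auto)
  also have "\<dots> = (n+1) * u x" by simp
  finally show ?thesis unfolding u_def by simp
qed


lemma entropy_E:
  assumes n: "0 < n" and k: "k \<le> n"
  shows "2 powr (real n * binary_entropy (real k / real n)) = real n ^ n / (real k ^ k * real (n-k) ^ (n-k))"
proof (cases "k = 0 \<or> k = n")
  case True
  then show ?thesis using n by (auto simp: binary_entropy_def)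
next
  case False
  hence k0: "0 < k" and kn: "k < n" using k by auto
  define p where "p = real k / real n"
  have p0: "p \<noteq> 0" "p \<noteq> 1" using k0 kn n by (auto simp: p_def field_simps)
  have q: "1 - p = real (n - k) / real n" using kn n by (simp add: p_def field_simps of_nat_diff)
  have nk: "real (n - k) > 0" using kn by simp
  have "real n * binary_entropy p = - (real n * p) * log 2 p - (real n * (1 - p)) * log 2 (1 - p)"
    using p0 by (simp add: binary_entropy_def algebra_simps)
  also have "\<dots> = - real k * (log 2 (real k) - log 2 (real n)) - real (n-k) * (log 2 (real (n-k)) - log 2 (real n))"
    unfolding q using n k0 nk by (simp add: p_def log_divide)
  also have "\<dots> = real n * log 2 (real n) - (real k * log 2 (real k) + real (n-k) * log 2 (real (n-k)))"
    using kn by (simp add: of_nat_diff algebra_simps)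
  also have "\<dots> = log 2 (real n ^ n / (real k ^ k * real (n-k) ^ (n-k)))"
    using n k0 nk by (simp add: log_divide log_mult log_nat_power)
  finally have "real n * binary_entropy p = log 2 (real n ^ n / (real k ^ k * real (n-k) ^ (n-k)))" .
  moreover have "real n ^ n / (real k ^ k * real (n-k) ^ (n-k)) > 0" using n k0 nk by simp
  ultimately show ?thesis unfolding p_def by simp
qed

lemma part2:
  assumes n: "1 \<le> n" and k: "k \<le> n" and x: "x \<le> n"
  shows "\<bar>krawtchouk n k (real x)\<bar> <
              2 powr (real n / 2 * (1 + binary_entropy (real k / real n)
                 - binary_entropy (real x / real n) + 1 / real n * log 2 (real n + 1)))"
proof -
  define K where "K = krawtchouk n k (real x)"
  define Cx where "Cx = real (n choose x)"
  define Ck where "Ck = real (n choose k)"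
  define ak where "ak = real k ^ k * real (n-k) ^ (n-k)"
  define ax where "ax = real x ^ x * real (n-x) ^ (n-x)"
  define f where "f y = real (n choose y) * (krawtchouk n k (real y))^2" for y
  have Cx: "Cx > 0" using x by (simp add: Cx_def)
  have Ck: "Ck > 0" using k by (simp add: Ck_def)
  have ak: "ak > 0" unfolding ak_def by (cases "k = 0"; cases "k = n") (use k in auto)
  have ax: "ax > 0" unfolding ax_def by (cases "x = 0"; cases "x = n") (use x in auto)
  define y0 where "y0 = (if x = 0 then n else 0)"
  have y0: "y0 \<noteq> x" "y0 \<le> n" using n by (auto simp: y0_def)
  have fy0: "f y0 = Ck^2"
  proof (cases "x = 0")
    case True
    have s: "((-1::real)^k)^2 = 1" by (simp only: power2_eq_square power_mult_distrib[symmetric]) simp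
    then show ?thesis using kraw_at_n[OF k] True by (simp add: f_def y0_def Ck_def power_mult_distrib)
  next
    case False
    then show ?thesis using kraw_at_0[of n k] by (simp add: f_def y0_def Ck_def)
  qed
  have "f x + f y0 = sum f {x, y0}" using y0 by simp
  also have "\<dots> \<le> sum f {..n}"
    by (rule sum_mono2) (use x y0 in \<open>auto simp: f_def\<close>)
  also have "\<dots> = 2^n * Ck" unfolding f_def Ck_def by (rule parseval[OF k])
  finally have fs: "f x + f y0 \<le> 2^n * Ck" .
  have "Ck^2 > 0" using Ck by simp
  hence "f x < 2^n * Ck" using fs fy0 by linarith
  hence P: "Cx * K^2 < 2^n * Ck" by (simp add: f_def Cx_def K_def)
  have b1: "Ck * ak \<le> real n ^ n"
  proof -
    have "real ((n choose k) * k^k * (n-k)^(n-k)) \<le> real (n^n)"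
      using binom_term_le[OF k] by (simp only: of_nat_le_iff)
    thus ?thesis by (simp add: Ck_def ak_def mult.assoc)
  qed
  have b2: "real n ^ n \<le> (real n + 1) * (Cx * ax)"
  proof -
    have "real (n^n) \<le> real ((n+1) * ((n choose x) * x^x * (n-x)^(n-x)))"
      using mode_lemma[OF x] by (simp only: of_nat_le_iff)
    thus ?thesis by (simp add: Cx_def ax_def mult.assoc distrib_right)
  qed
  have "Cx * (K^2 * ak) < Cx * (2^n * (real n + 1) * ax)"
  proof -
    have "Cx * (K^2 * ak) = (Cx * K^2) * ak" by (simp add: mult_ac)
    also have "\<dots> < (2^n * Ck) * ak" using P ak by simp
    also have "\<dots> = 2^n * (Ck * ak)" by (simp add: mult_ac)
    also have "\<dots> \<le> 2^n * real n ^ n" using b1 by simp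
    also have "\<dots> \<le> 2^n * ((real n + 1) * (Cx * ax))" using b2 by simp
    also have "\<dots> = Cx * (2^n * (real n + 1) * ax)" by (simp add: mult_ac)
    finally show ?thesis .
  qed
  hence "K^2 * ak < 2^n * (real n + 1) * ax" using Cx by simp
  hence K2: "K^2 < 2^n * (real n + 1) * ax / ak" using ak by (simp add: field_simps)
  have n0: "0 < n" using n by simp
  have Ek: "2 powr (real n * binary_entropy (real k / real n)) = real n ^ n / ak"
    unfolding ak_def by (rule entropy_E[OF n0 k])
  have Ex: "2 powr (real n * binary_entropy (real x / real n)) = real n ^ n / ax"
    unfolding ax_def by (rule entropy_E[OF n0 x])
  have nn: "real n ^ n > 0" using n0 by simp
  have "real n * (1 + binary_entropy (real k / real n)
                 - binary_entropy (real x / real n) + 1 / real n * log 2 (real n + 1))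
     = real n + real n * binary_entropy (real k / real n) - real n * binary_entropy (real x / real n)
        + log 2 (real n + 1)" using n0 by (simp add: algebra_simps)
  hence "2 powr (real n * (1 + binary_entropy (real k / real n)
                 - binary_entropy (real x / real n) + 1 / real n * log 2 (real n + 1)))
      = 2^n * (real n ^ n / ak) / (real n ^ n / ax) * (real n + 1)"
    by (simp add: powr_add powr_diff Ek Ex powr_realpow)
  also have "\<dots> = 2^n * (real n + 1) * ax / ak" using nn ak ax by (simp add: field_simps)
  finally have M: "2 powr (real n * (1 + binary_entropy (real k / real n)
                 - binary_entropy (real x / real n) + 1 / real n * log 2 (real n + 1)))
      = 2^n * (real n + 1) * ax / ak" .
  have "2 powr (real n / 2 * (1 + binary_entropy (real k / real n)
                 - binary_entropy (real x / real n) + 1 / real n * log 2 (real n + 1)))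
      = sqrt (2 powr (real n * (1 + binary_entropy (real k / real n)
                 - binary_entropy (real x / real n) + 1 / real n * log 2 (real n + 1))))"
    by (subst powr_half_sqrt_powr[symmetric]) (simp_all add: mult_ac)
  also have "\<dots> = sqrt (2^n * (real n + 1) * ax / ak)" by (simp only: M)
  finally have R: "2 powr (real n / 2 * (1 + binary_entropy (real k / real n)
                 - binary_entropy (real x / real n) + 1 / real n * log 2 (real n + 1)))
      = sqrt (2^n * (real n + 1) * ax / ak)" .
  have "\<bar>K\<bar> = sqrt (K^2)" by simp
  also have "\<dots> < sqrt (2^n * (real n + 1) * ax / ak)" using K2 by (simp only: real_sqrt_less_iff)
  finally show ?thesis unfolding R K_def .
qed

lemma kraw_diff:
  assumes n: "1 \<le> n"
  shows "krawtchouk n (Suc m) (x + 1) - krawtchouk n (Suc m) x = -2 * krawtchouk (n-1) m x"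
proof -
  define a where "a = x"
  define b where "b = real (n-1) - x"
  have nb1: "real n - x = b + 1" using n by (simp add: b_def of_nat_diff)
  have nb: "real n - (x + 1) = b" using n by (simp add: b_def of_nat_diff)
  have pas: "(t + 1) gchoose (Suc i) = (t gchoose i) + (t gchoose (Suc i))" for t :: real and i
    by (rule gbinomial_Suc_Suc)
  define T where "T j = (-1)^j * (a gchoose j) * (b gchoose (Suc m - j))" for j
  define U where "U j = (-1)^j * (a gchoose j) * (b gchoose (m - j))" for j
  have K0: "krawtchouk n (Suc m) x = (\<Sum>j\<le>Suc m. T j) + (\<Sum>j\<le>m. U j)"
  proof -
    have "krawtchouk n (Suc m) x = (\<Sum>j\<le>Suc m. (-1)^j * (a gchoose j) * ((b + 1) gchoose (Suc m - j)))"
      unfolding krawtchouk_def nb1 a_def ..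
    also have "\<dots> = (\<Sum>j\<le>m. (-1)^j * (a gchoose j) * ((b + 1) gchoose (Suc m - j))) + T (Suc m)"
      by (simp add: T_def)
    also have "(\<Sum>j\<le>m. (-1)^j * (a gchoose j) * ((b + 1) gchoose (Suc m - j))) = (\<Sum>j\<le>m. T j + U j)"
    proof (intro sum.cong refl)
      fix j assume "j \<in> {..m}"
      hence e: "Suc m - j = Suc (m - j)" by auto
      show "(-1)^j * (a gchoose j) * ((b + 1) gchoose (Suc m - j)) = T j + U j"
        unfolding T_def U_def e pas by (simp add: algebra_simps)
    qed
    finally show ?thesis by (simp add: sum.distrib)
  qed
  have K1: "krawtchouk n (Suc m) (x + 1) = (\<Sum>j\<le>Suc m. T j) - (\<Sum>j\<le>m. U j)"
  proof -
    have "krawtchouk n (Suc m) (x + 1) = (\<Sum>j\<le>Suc m. (-1)^j * ((a + 1) gchoose j) * (b gchoose (Suc m - j)))"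
      unfolding krawtchouk_def nb a_def ..
    also have "\<dots> = T 0 + (\<Sum>j\<le>m. (-1)^(Suc j) * ((a + 1) gchoose (Suc j)) * (b gchoose (Suc m - Suc j)))"
      by (subst sum.atMost_Suc_shift) (simp add: T_def)
    also have "(\<Sum>j\<le>m. (-1)^(Suc j) * ((a + 1) gchoose (Suc j)) * (b gchoose (Suc m - Suc j)))
        = (\<Sum>j\<le>m. T (Suc j) - U j)"
      unfolding pas T_def U_def by (intro sum.cong refl) (simp add: algebra_simps)
    also have "T 0 + (\<Sum>j\<le>m. T (Suc j) - U j) = (\<Sum>j\<le>Suc m. T j) - (\<Sum>j\<le>m. U j)"
      unfolding sum_subtractf sum.atMost_Suc_shift[of T m] by simp
    finally show ?thesis .
  qed
  have KU: "krawtchouk (n-1) m x = (\<Sum>j\<le>m. U j)"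
    unfolding krawtchouk_def U_def a_def b_def ..
  show ?thesis using K0 K1 KU by simp
qed


lemma gchoose_poly: "\<exists>p. \<forall>x::real. x gchoose j = poly p x"
proof
  show "\<forall>x::real. x gchoose j = poly (smult (1 / fact j) (\<Prod>i\<in>{0..<j}. [:- of_nat i, 1:])) x"
    by (simp add: gbinomial_prod_rev poly_prod)
qed

lemma kraw_poly: "\<exists>p. \<forall>x. krawtchouk m k x = poly p x"
proof -
  have "\<forall>i. \<exists>p. \<forall>x::real. x gchoose i = poly p x" using gchoose_poly by blast
  then obtain P where P: "\<And>i x. (x::real) gchoose i = poly (P i) x" by metis
  define q where "q = (\<Sum>i\<le>k. smult ((-1)^i) (P i * pcompose (P (k - i)) [:real m, -1:]))"
  have "krawtchouk m k x = poly q x" for x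
    unfolding q_def krawtchouk_def by (simp add: poly_sum poly_pcompose P[symmetric] mult.assoc)
  thus ?thesis by blast
qed

lemma part1:
  assumes k: "2 \<le> k" "k \<le> n" and x: "0 \<le> x" "x \<le> kraw_smallest_root (n - 1) (k - 1)"
  shows "krawtchouk n k x \<ge> krawtchouk n k (x + 1)"
proof -
  obtain p where p: "\<And>x. krawtchouk (n-1) (k-1) x = poly p x" using kraw_poly by blast
  have p0: "poly p 0 > 0" using k by (simp add: p[symmetric] kraw_at_0)
  hence "p \<noteq> 0" by auto
  hence fin: "finite {x. krawtchouk (n-1) (k-1) x = 0}" unfolding p by (rule poly_roots_finite)
  have nonneg: "krawtchouk (n-1) (k-1) x \<ge> 0"
  proof (rule ccontr)
    assume neg: "\<not> ?thesis"
    hence negp: "poly p x < 0" unfolding p by simp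
    have "\<exists>t. 0 \<le> t \<and> t \<le> x \<and> poly p t = 0"
      by (rule IVT2') (use negp p0 x in \<open>auto intro!: continuous_intros\<close>)
    then obtain t where t: "0 \<le> t" "t \<le> x" "poly p t = 0" by blast
    have "t \<noteq> x" using t negp by auto
    hence "t < x" using t by simp
    also have "x \<le> Min {x. krawtchouk (n-1) (k-1) x = 0}"
      using x unfolding kraw_smallest_root_def by simp
    also have "\<dots> \<le> t" using fin t unfolding p by (intro Min_le) auto
    finally show False by simp
  qed
  obtain m where m: "k = Suc m" using k by (cases k) auto
  have km: "k - 1 = m" using m by simp
  have n1: "1 \<le> n" using k by simp
  have "krawtchouk n k (x + 1) - krawtchouk n k x = -2 * krawtchouk (n-1) (k-1) x"
    unfolding km unfolding m by (rule kraw_diff[OF n1])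
  thus ?thesis using nonneg by simp
qed

theorem lemma2:
  fixes n :: nat
  assumes "n \<ge> 2"
  shows "(\<forall>k::nat. 2 \<le> k \<and> k \<le> n \<longrightarrow>
            (\<forall>x::real. 0 \<le> x \<and> x \<le> kraw_smallest_root (n - 1) (k - 1) \<longrightarrow>
               krawtchouk n k x \<ge> krawtchouk n k (x + 1)))
       \<and> (\<forall>k x :: nat. k \<le> n \<and> x \<le> n \<longrightarrow>
            \<bar>krawtchouk n k (real x)\<bar> <
              2 powr (real n / 2 * (1 + binary_entropy (real k / real n)
                 - binary_entropy (real x / real n) + 1 / real n * log 2 (real n + 1))))"
proof (intro conjI allI impI)
  fix k x assume "2 \<le> k \<and> k \<le> n" "0 \<le> x \<and> x \<le> kraw_smallest_root (n - 1) (k - 1)"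
  then show "krawtchouk n k x \<ge> krawtchouk n k (x + 1)" using part1 by blast
next
  fix k x :: nat assume "k \<le> n \<and> x \<le> n"
  moreover have "1 \<le> n" using assms by simp
  ultimately show "\<bar>krawtchouk n k (real x)\<bar> <
              2 powr (real n / 2 * (1 + binary_entropy (real k / real n)
                 - binary_entropy (real x / real n) + 1 / real n * log 2 (real n + 1)))"
    using part2 by blast
qed

end
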